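(* Let $D$ be a regular $(v,k,\lambda,\mu)$-PDS in a finite group $G$ with $0<\mu<k$ and $\sqrt\Delta\in\mathbb{Z}$. Let $p$ be a prime dividing $\sqrt\Delta$ and $p^\ell$ the exact power of $p$ dividing $\sqrt\Delta$. If $h\in G$, $h\ne1$, and $p^\ell\nmid|C_G(h)|$, then \[|h^G\cap D|\,|C_G(h)|\equiv k-\theta_2\pmod{p^\ell},\] and for $h=1$, $|h^G\cap D|\,|C_G(h)|\equiv k+\theta_2(|G|-1)\pmod{p^\ell}$.
   Context: A $(v,k,\lambda,\mu)$-PDS in a group $G$ of order $v$ is a $k$-subset $D$ such that every nonidentity element of $D$ is $xy^{-1}$ ($x,y\in D$) in exactly $\lambda$ ways and every nonidentity element of $G\setminus D$ in exactly $\mu$ ways; regular means $D=D^{(-1)}$ and $1\notin D$. $\Delta=(\lambda-\mu)^2+4(k-\mu)$, $\theta_2=\frac12(\lambda-\mu-\sqrt\Delta)$. *)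

theory Defs
  imports "HOL-Algebra.Group" "HOL-Computational_Algebra.Primes" "HOL-Number_Theory.Cong"
begin

definition pds_rep :: "('a, 'b) monoid_scheme \<Rightarrow> 'a set \<Rightarrow> 'a \<Rightarrow> nat" where
  "pds_rep G D g = card {(x, y). x \<in> D \<and> y \<in> D \<and> x \<otimes>\<^bsub>G\<^esub> inv\<^bsub>G\<^esub> y = g}"

definition is_PDS :: "('a, 'b) monoid_scheme \<Rightarrow> 'a set \<Rightarrow> nat \<Rightarrow> nat \<Rightarrow> nat \<Rightarrow> nat \<Rightarrow> bool" where
  "is_PDS G D v k lam mu \<longleftrightarrow>
     card (carrier G) = v \<and> D \<subseteq> carrier G \<and> card D = k \<and>
     (\<forall>g \<in> D. g \<noteq> \<one>\<^bsub>G\<^esub> \<longrightarrow> pds_rep G D g = lam) \<and>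
     (\<forall>g \<in> carrier G - D. g \<noteq> \<one>\<^bsub>G\<^esub> \<longrightarrow> pds_rep G D g = mu)"

definition is_regular_PDS :: "('a, 'b) monoid_scheme \<Rightarrow> 'a set \<Rightarrow> nat \<Rightarrow> nat \<Rightarrow> nat \<Rightarrow> nat \<Rightarrow> bool" where
  "is_regular_PDS G D v k lam mu \<longleftrightarrow>
     is_PDS G D v k lam mu \<and> (\<lambda>x. inv\<^bsub>G\<^esub> x) ` D = D \<and> \<one>\<^bsub>G\<^esub> \<notin> D"

definition pds_Delta :: "nat \<Rightarrow> nat \<Rightarrow> nat \<Rightarrow> int" where
  "pds_Delta k lam mu = (int lam - int mu)^2 + 4 * (int k - int mu)"

text \<open>theta_2 = (lambda - mu - sqrt Delta)/2, given the integer square root s of Delta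
  (the division is exact since s and lambda - mu have the same parity).\<close>
definition pds_theta2 :: "nat \<Rightarrow> nat \<Rightarrow> int \<Rightarrow> int" where
  "pds_theta2 lam mu s = (int lam - int mu - s) div 2"

definition centralizer :: "('a, 'b) monoid_scheme \<Rightarrow> 'a \<Rightarrow> 'a set" where
  "centralizer G h = {g \<in> carrier G. g \<otimes>\<^bsub>G\<^esub> h = h \<otimes>\<^bsub>G\<^esub> g}"

definition conj_class :: "('a, 'b) monoid_scheme \<Rightarrow> 'a \<Rightarrow> 'a set" where
  "conj_class G h = {g \<otimes>\<^bsub>G\<^esub> h \<otimes>\<^bsub>G\<^esub> inv\<^bsub>G\<^esub> g | g. g \<in> carrier G}"

end

theory Submission
  imports Defs "Jordan_Normal_Form.Schur_Decomposition" "Berlekamp_Zassenhaus.Factor_Bound" "HOL-Algebra.Multiplicative_Group"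
begin

definition mtrace :: "'a::comm_ring_1 mat \<Rightarrow> 'a" where
  "mtrace A = (\<Sum> i<dim_row A. A $$ (i,i))"

lemma mtrace_comm:
  assumes A: "A \<in> carrier_mat n n" and B: "B \<in> carrier_mat n n"
  shows "mtrace (A*B) = mtrace (B*A)"
proof -
  have "mtrace (A*B) = (\<Sum>i<n. \<Sum>l<n. A $$ (i,l) * B $$ (l,i))"
    using A B unfolding mtrace_def
    by (auto simp: scalar_prod_def row_def col_def atLeast0LessThan intro!: sum.cong)
  also have "\<dots> = (\<Sum>l<n. \<Sum>i<n. B $$ (l,i) * A $$ (i,l))"
    by (subst sum.swap) (simp add: mult.commute)
  also have "\<dots> = mtrace (B*A)"
    using A B unfolding mtrace_def
    by (auto simp: scalar_prod_def row_def col_def atLeast0LessThan intro!: sum.cong)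
  finally show ?thesis .
qed

lemma mtrace_similar:
  assumes sim: "similar_mat_wit A B P Q"
  shows "mtrace A = mtrace B"
proof -
  note d = similar_mat_witD[OF refl sim]
  have "mtrace A = mtrace ((P * B) * Q)" by (simp only: d(3))
  also have "\<dots> = mtrace (Q * (P * B))"
    by (rule mtrace_comm[OF mult_carrier_mat[OF d(6) d(5)] d(7)])
  also have "Q * (P * B) = (Q * P) * B" by (rule assoc_mult_mat[symmetric, OF d(7) d(6) d(5)])
  also have "\<dots> = B" by (simp only: d(2) left_mult_one_mat[OF d(5)])
  finally show ?thesis .
qed

lemma mtrace_diag:
  assumes "B \<in> carrier_mat n n"
  shows "mtrace B = sum_list (diag_mat B)"
  using assms unfolding mtrace_def diag_mat_def
  by (simp add: sum_list_sum_nth atLeast0LessThan)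

lemma coeff_linear_mult:
  fixes a :: "'a::comm_ring_1"
  shows "Polynomial.coeff ([:-a,1:] * R) k = (if k = 0 then -a * Polynomial.coeff R 0 else Polynomial.coeff R (k-1) - a * Polynomial.coeff R k)"
  by (cases k) (auto simp: coeff_pCons algebra_simps)

lemma vieta:
  fixes as :: "'a::comm_ring_1 list"
  shows "Polynomial.coeff (\<Prod>a\<leftarrow>as. [:-a,1:]) (length as) = 1 \<and>
   (\<forall>k > length as. Polynomial.coeff (\<Prod>a\<leftarrow>as. [:-a,1:]) k = 0) \<and>
   (as \<noteq> [] \<longrightarrow> Polynomial.coeff (\<Prod>a\<leftarrow>as. [:-a,1:]) (length as - 1) = - sum_list as)"
proof (induction as)
  case Nil
  then show ?case by simp
next
  case (Cons a as)
  let ?R = "\<Prod>a\<leftarrow>as. [:-a,1:]"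
  have e: "(\<Prod>a\<leftarrow>a#as. [:-a,1:]) = [:-a,1:] * ?R" by simp
  show ?case unfolding e
  proof (intro conjI allI impI)
    show "Polynomial.coeff ([:-a,1:] * ?R) (length (a#as)) = 1"
      using Cons by (simp only: coeff_linear_mult) simp
    fix k assume "length (a#as) < k"
    then show "Polynomial.coeff ([:-a,1:] * ?R) k = 0"
      using Cons by (simp only: coeff_linear_mult) simp
  next
    show "Polynomial.coeff ([:-a,1:] * ?R) (length (a#as) - 1) = - sum_list (a#as)"
      using Cons by (simp only: coeff_linear_mult) (cases as, auto)
  qed
qed

lemma dvd_prod_list_map: "x \<in> set xs \<Longrightarrow> (f x :: 'b::comm_monoid_mult) dvd prod_list (map f xs)"
  by (induction xs) (auto intro: dvd_mult2 dvd_mult)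

lemma trace_integral:
  fixes T :: "rat mat"
  assumes T: "T \<in> carrier_mat n n" and N: "N > 0" and pw: "T ^\<^sub>m (Suc N) = T"
  shows "mtrace T \<in> \<int>"
proof -
  define TC where "TC = map_mat (of_rat :: rat \<Rightarrow> complex) T"
  have TC: "TC \<in> carrier_mat n n" using T unfolding TC_def by simp
  have pwC: "TC ^\<^sub>m (Suc N) = TC"
    unfolding TC_def of_rat_hom.mat_hom_pow[OF T, symmetric] pw ..
  obtain as where cp: "char_poly TC = (\<Prod>a\<leftarrow>as. [:- a, 1:])" and len: "length as = n"
    using char_poly_factorized[OF TC] by blast
  define f :: "complex poly" where "f = Polynomial.monom 1 (Suc N) - [:0,1:]"
  have root: "a ^ Suc N = a" if a: "a \<in> set as" for a
  proof -
    have "[:-a,1:] dvd char_poly TC" unfolding cp using a by (rule dvd_prod_list_map)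
    then have "poly (char_poly TC) a = 0" by (simp add: poly_eq_0_iff_dvd)
    then have "eigenvalue TC a" using eigenvalue_root_char_poly[OF TC] by simp
    then obtain v where ev: "eigenvector TC v a" unfolding eigenvalue_def by blast
    from eigenvector_pow[OF TC ev, of "Suc N"] pwC
    have "TC *\<^sub>v v = a ^ Suc N \<cdot>\<^sub>v v" by simp
    moreover have "TC *\<^sub>v v = a \<cdot>\<^sub>v v" and v: "v \<in> carrier_vec n" "v \<noteq> 0\<^sub>v n"
      using ev TC unfolding eigenvector_def by auto
    ultimately have eq: "a ^ Suc N \<cdot>\<^sub>v v = a \<cdot>\<^sub>v v" by simp
    from v obtain i where i: "i < n" "v $ i \<noteq> 0" by (metis carrier_vecD eq_vecI index_zero_vec(1,2))
    from arg_cong[OF eq, of "\<lambda>w. w $ i"] i v show ?thesis by simp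
  qed
  have dvdf: "[:-a,1:] dvd f" if "a \<in> set as" for a
  proof -
    have "poly f a = a ^ Suc N - a" unfolding f_def by (simp only: poly_diff poly_monom poly_pCons) simp
    then have "poly f a = 0" using root[OF that] by simp
    then show ?thesis by (simp add: poly_eq_0_iff_dvd)
  qed
  have "(\<forall>a\<in>set bs. [:-a,1:] dvd f) \<Longrightarrow> (\<Prod>a\<leftarrow>bs. [:- a, 1:]) dvd (\<Prod>a\<leftarrow>bs. f)" for bs
  proof (induction bs)
    case Nil
    then show ?case by simp
  next
    case (Cons b bs)
    from Cons.prems have d1: "[:-b,1:] dvd f" by simp
    from Cons.prems have "\<forall>a\<in>set bs. [:-a,1:] dvd f" by simp
    then have d2: "(\<Prod>a\<leftarrow>bs. [:- a, 1:]) dvd (\<Prod>a\<leftarrow>bs. f)" by (rule Cons.IH)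
    show ?case unfolding list.map prod_list.Cons by (rule mult_dvd_mono[OF d1 d2])
  qed
  then have d3: "(\<Prod>a\<leftarrow>as. [:- a, 1:]) dvd (\<Prod>a\<leftarrow>as. f)" using dvdf by blast
  have "(\<Prod>a\<leftarrow>bs. f) = f ^ length bs" for bs :: "complex list" by (induction bs) simp_all
  from this[of as] len have "(\<Prod>a\<leftarrow>as. f) = f ^ n" by simp
  with d3 have dC: "char_poly TC dvd f ^ n" unfolding cp by simp
  define fQ :: "rat poly" where "fQ = Polynomial.monom 1 (Suc N) - [:0,1:]"
  define fZ :: "int poly" where "fZ = Polynomial.monom 1 (Suc N) - [:0,1:]"
  interpret mpQ: map_poly_comm_ring_hom "of_rat :: rat \<Rightarrow> complex" ..
  have "map_poly of_rat fQ = f" unfolding fQ_def f_def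
    by (simp add: mpQ.hom_minus of_rat_hom.map_poly_hom_monom)
  then have "map_poly of_rat (fQ ^ n) = f ^ n" by (simp add: mpQ.hom_power)
  moreover have cpTC: "char_poly TC = map_poly of_rat (char_poly T)"
    unfolding TC_def by (rule of_rat_hom.char_poly_hom[OF T])
  ultimately have dQ: "char_poly T dvd fQ ^ n" using dC of_rat_hom.dvd_map_poly_hom_imp_dvd by metis
  have "map_poly rat_of_int fZ = fQ" unfolding fQ_def fZ_def
    by (simp add: of_int_poly_hom.hom_minus of_int_hom.map_poly_hom_monom)
  then have fZQ: "map_poly rat_of_int (fZ ^ n) = fQ ^ n" by (simp add: of_int_poly_hom.hom_power)
  from dQ obtain h where hh: "fQ ^ n = char_poly T * h" by (elim dvdE)
  obtain r rg where rr: "rat_to_normalized_int_poly (char_poly T) = (r, rg)" by force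
  from rat_to_int_factor_explicit[OF _ rr, of "fZ ^ n" h] hh fZQ
  obtain r' where fac: "fZ ^ n = rg * smult (content (fZ ^ n)) r'" by auto
  have monZ: "monic (fZ ^ n)" unfolding fZ_def
  proof -
    have d: "degree (- [:0,1:] :: int poly) < degree (Polynomial.monom 1 (Suc N) :: int poly)"
      using N by (simp add: degree_monom_eq)
    have "lead_coeff ((- [:0,1:]) + Polynomial.monom 1 (Suc N) :: int poly) = lead_coeff (Polynomial.monom 1 (Suc N) :: int poly)"
      by (rule lead_coeff_add_le[OF d])
    also have "\<dots> = 1" by (simp add: degree_monom_eq)
    finally have "monic ((- [:0,1:]) + Polynomial.monom 1 (Suc N) :: int poly)" .
    then have "monic (Polynomial.monom 1 (Suc N) - [:0,1:] :: int poly)" by (simp only: diff_conv_add_uminus add.commute)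
    then show "monic ((Polynomial.monom 1 (Suc N) - [:0,1:] :: int poly) ^ n)" by (rule monic_power)
  qed
  have lc: "lead_coeff (fZ ^ n) = lead_coeff rg * lead_coeff (smult (content (fZ ^ n)) r')"
    using fac by (metis lead_coeff_mult)
  with monZ have "lead_coeff rg * lead_coeff (smult (content (fZ ^ n)) r') = 1" by simp
  then have lrg: "lead_coeff rg = 1 \<or> lead_coeff rg = -1" using zmult_eq_1_iff by blast
  from rat_to_normalized_int_poly[OF rr] have cpT: "char_poly T = smult r (of_int_poly rg)" and r0: "r > 0" by auto
  from degree_monic_char_poly[OF T] have monT: "monic (char_poly T)" and degT: "degree (char_poly T) = n" by auto
  have "lead_coeff (char_poly T) = r * of_int (lead_coeff rg)"
    unfolding cpT by simp
  with monT have "r * of_int (lead_coeff rg) = 1" by simp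
  with lrg r0 have r1: "r = 1" by auto
  have coefT: "Polynomial.coeff (char_poly T) k \<in> \<int>" for k
    unfolding cpT r1 by simp
  show ?thesis
  proof (cases "n = 0")
    case True
    then show ?thesis using T unfolding mtrace_def by simp
  next
    case False
    obtain B P Q where sd: "schur_decomposition TC as = (B,P,Q)" by (cases "schur_decomposition TC as") auto
    from schur_decomposition[OF TC cp sd] have sim: "similar_mat_wit TC B P Q" and dg: "diag_mat B = as" by auto
    from sim TC have Bc: "B \<in> carrier_mat n n" unfolding similar_mat_wit_def Let_def by auto
    have "mtrace TC = sum_list as" using mtrace_similar[OF sim] mtrace_diag[OF Bc] dg by simp
    also have "\<dots> = - Polynomial.coeff (char_poly TC) (n - 1)"
      using vieta[of as] False len cp by auto
    also have "\<dots> = - of_rat (Polynomial.coeff (char_poly T) (n - 1))"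
      unfolding cpTC by (simp add: coeff_map_poly)
    finally have eq1: "mtrace TC = of_rat (- Polynomial.coeff (char_poly T) (n - 1))" by (simp add: of_rat_minus)
    have "mtrace TC = of_rat (mtrace T)"
      unfolding mtrace_def TC_def using T by (simp add: of_rat_sum)
    with eq1 have "mtrace T = - Polynomial.coeff (char_poly T) (n - 1)" by simp
    then show ?thesis using coefT by (simp add: Ints_minus)
  qed
qed

locale pds_ctx = group +
  fixes D :: "'a set" and k lam mu :: nat
  assumes fin: "finite (carrier G)" and Dsub: "D \<subseteq> carrier G" and cardD: "card D = k"
    and lamD: "\<And>g. g \<in> D \<Longrightarrow> g \<noteq> \<one> \<Longrightarrow> pds_rep G D g = lam"
    and muD: "\<And>g. g \<in> carrier G \<Longrightarrow> g \<notin> D \<Longrightarrow> g \<noteq> \<one> \<Longrightarrow> pds_rep G D g = mu"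
    and invD: "\<And>d. d \<in> D \<Longrightarrow> inv d \<in> D" and oneD: "\<one> \<notin> D"
begin

lemma Dc: "d \<in> D \<Longrightarrow> d \<in> carrier G" using Dsub by auto

lemma row_count:
  assumes x: "x \<in> carrier G"
  shows "card {z \<in> carrier G. x \<otimes> inv z \<in> D} = k"
proof -
  have "bij_betw (\<lambda>z. x \<otimes> inv z) {z \<in> carrier G. x \<otimes> inv z \<in> D} D"
  proof (rule bij_betw_byWitness[where f' = "\<lambda>a. inv a \<otimes> x"])
    show "\<forall>a\<in>{z \<in> carrier G. x \<otimes> inv z \<in> D}. inv (x \<otimes> inv a) \<otimes> x = a"
      using x by (auto simp: inv_mult_group m_assoc)
    show "\<forall>a'\<in>D. x \<otimes> inv (inv a' \<otimes> x) = a'"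
      using x Dc by (auto simp: inv_mult_group m_assoc[symmetric])
    show "(\<lambda>z. x \<otimes> inv z) ` {z \<in> carrier G. x \<otimes> inv z \<in> D} \<subseteq> D" by auto
    show "(\<lambda>a. inv a \<otimes> x) ` D \<subseteq> {z \<in> carrier G. x \<otimes> inv z \<in> D}"
      using x Dc by (auto simp: inv_mult_group m_assoc[symmetric])
  qed
  then show ?thesis using cardD by (simp add: bij_betw_same_card)
qed

lemma col_count:
  assumes y: "y \<in> carrier G"
  shows "card {z \<in> carrier G. z \<otimes> inv y \<in> D} = k"
proof -
  have "bij_betw (\<lambda>z. z \<otimes> inv y) {z \<in> carrier G. z \<otimes> inv y \<in> D} D"
  proof (rule bij_betw_byWitness[where f' = "\<lambda>a. a \<otimes> y"])
    show "\<forall>a\<in>{z \<in> carrier G. z \<otimes> inv y \<in> D}. a \<otimes> inv y \<otimes> y = a"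
      using y by (auto simp: m_assoc)
    show "\<forall>a'\<in>D. a' \<otimes> y \<otimes> inv y = a'"
      using y Dc by (auto simp: m_assoc)
    show "(\<lambda>z. z \<otimes> inv y) ` {z \<in> carrier G. z \<otimes> inv y \<in> D} \<subseteq> D" by auto
    show "(\<lambda>a. a \<otimes> y) ` D \<subseteq> {z \<in> carrier G. z \<otimes> inv y \<in> D}"
      using y Dc by (auto simp: m_assoc)
  qed
  then show ?thesis using cardD by (simp add: bij_betw_same_card)
qed

lemma pair_count:
  assumes x: "x \<in> carrier G" and y: "y \<in> carrier G"
  shows "card {z \<in> carrier G. x \<otimes> inv z \<in> D \<and> z \<otimes> inv y \<in> D} = pds_rep G D (x \<otimes> inv y)"
proof -
  let ?A = "{z \<in> carrier G. x \<otimes> inv z \<in> D \<and> z \<otimes> inv y \<in> D}"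
  let ?B = "{(a, b). a \<in> D \<and> b \<in> D \<and> a \<otimes> inv b = x \<otimes> inv y}"
  have "bij_betw (\<lambda>z. (x \<otimes> inv z, y \<otimes> inv z)) ?A ?B"
  proof (rule bij_betw_byWitness[where f' = "\<lambda>(a,b). inv a \<otimes> x"])
    show "\<forall>a\<in>?A. (\<lambda>(a,b). inv a \<otimes> x) (x \<otimes> inv a, y \<otimes> inv a) = a"
      using x by (auto simp: inv_mult_group m_assoc)
    show "\<forall>a'\<in>?B. (\<lambda>z. (x \<otimes> inv z, y \<otimes> inv z)) ((\<lambda>(a,b). inv a \<otimes> x) a') = a'"
    proof
      fix p assume "p \<in> ?B"
      then obtain a b where p: "p = (a,b)" and a: "a \<in> D" and b: "b \<in> D" and e: "a \<otimes> inv b = x \<otimes> inv y"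
        by auto
      have ac: "a \<in> carrier G" and bc: "b \<in> carrier G" using a b Dc by auto
      have e1: "x \<otimes> inv (inv a \<otimes> x) = a" using x ac by (simp add: inv_mult_group m_assoc[symmetric])
      have "inv b = inv a \<otimes> (x \<otimes> inv y)" using e ac bc x y
        by (metis inv_closed inv_solve_left m_closed)
      then have "b = inv (inv a \<otimes> (x \<otimes> inv y))" using bc by (metis inv_inv)
      also have "\<dots> = y \<otimes> inv x \<otimes> a" using ac x y by (simp add: inv_mult_group m_assoc)
      finally have e2: "y \<otimes> inv (inv a \<otimes> x) = b" using ac x y by (simp add: inv_mult_group m_assoc)
      show "(\<lambda>z. (x \<otimes> inv z, y \<otimes> inv z)) ((\<lambda>(a,b). inv a \<otimes> x) p) = p"
        using p e1 e2 by simp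
    qed
    show "(\<lambda>z. (x \<otimes> inv z, y \<otimes> inv z)) ` ?A \<subseteq> ?B"
    proof
      fix p assume "p \<in> (\<lambda>z. (x \<otimes> inv z, y \<otimes> inv z)) ` ?A"
      then obtain z where z: "z \<in> carrier G" "x \<otimes> inv z \<in> D" "z \<otimes> inv y \<in> D"
        and p: "p = (x \<otimes> inv z, y \<otimes> inv z)" by auto
      have "inv (z \<otimes> inv y) \<in> D" using invD z by blast
      then have 1: "y \<otimes> inv z \<in> D" using z y by (simp add: inv_mult_group)
      have 2: "x \<otimes> inv z \<otimes> inv (y \<otimes> inv z) = x \<otimes> inv y"
        using x y z by (simp add: inv_mult_group m_assoc) (simp add: m_assoc[symmetric])
      show "p \<in> ?B" using 1 2 z p by simp
    qed
    show "(\<lambda>(a,b). inv a \<otimes> x) ` ?B \<subseteq> ?A"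
    proof
      fix q assume "q \<in> (\<lambda>(a,b). inv a \<otimes> x) ` ?B"
      then obtain a b where a: "a \<in> D" and b: "b \<in> D" and e: "a \<otimes> inv b = x \<otimes> inv y"
        and q: "q = inv a \<otimes> x" by auto
      have ac: "a \<in> carrier G" and bc: "b \<in> carrier G" using a b Dc by auto
      have 1: "x \<otimes> inv (inv a \<otimes> x) = a" using x ac by (simp add: inv_mult_group m_assoc[symmetric])
      have "inv a \<otimes> x \<otimes> inv y = inv a \<otimes> (a \<otimes> inv b)" using e ac x y by (simp add: m_assoc)
      also have "\<dots> = inv b" using ac bc by (simp add: m_assoc[symmetric])
      finally have 2: "inv a \<otimes> x \<otimes> inv y = inv b" .
      show "q \<in> ?A" using 1 2 a b ac x invD q by auto
    qed
  qed
  then show ?thesis unfolding pds_rep_def by (simp add: bij_betw_same_card)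
qed

lemma sum_ind: "(\<Sum>z\<in>carrier G. (if P z then 1 else 0) :: int) = int (card {z \<in> carrier G. P z})"
  using fin by (simp add: sum.inter_filter[symmetric])

definition bf :: "int \<Rightarrow> 'a \<Rightarrow> int" where
  "bf th g = (if g \<in> D then 1 else 0) - th * (if g = \<one> then 1 else 0)"

lemma S2row:
  assumes x: "x \<in> carrier G"
  shows "(\<Sum>z\<in>carrier G. bf th (x \<otimes> inv z)) = int k - th"
proof -
  have "{z. z = x \<and> z \<in> carrier G} = {x}" using x by auto
  have e: "\<And>z. z \<in> carrier G \<Longrightarrow> bf th (x \<otimes> inv z) = (if x \<otimes> inv z \<in> D then 1 else 0) - th * (if z = x then 1 else 0)"
    using x unfolding bf_def by (auto simp: r_inv) (metis inv_closed inv_equality inv_inv r_inv)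
  have "(\<Sum>z\<in>carrier G. bf th (x \<otimes> inv z)) = (\<Sum>z\<in>carrier G. (if x \<otimes> inv z \<in> D then 1 else 0) - th * (if z = x then 1 else 0))"
    by (rule sum.cong[OF refl e])
  also have "\<dots> = int k - th" using x fin \<open>{z. z = x \<and> z \<in> carrier G} = {x}\<close>
    by (simp add: sum_subtractf sum_ind row_count sum_distrib_left[symmetric])
  finally show ?thesis .
qed

lemma eq1: "a \<in> carrier G \<Longrightarrow> b \<in> carrier G \<Longrightarrow> (a \<otimes> inv b = \<one>) = (a = b)"
  by (metis inv_closed inv_equality inv_inv r_inv)

lemma S2col:
  assumes y: "y \<in> carrier G"
  shows "(\<Sum>z\<in>carrier G. bf th (z \<otimes> inv y)) = int k - th"
proof -
  have "{z. z = y \<and> z \<in> carrier G} = {y}" using y by auto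
  have e: "\<And>z. z \<in> carrier G \<Longrightarrow> bf th (z \<otimes> inv y) = (if z \<otimes> inv y \<in> D then 1 else 0) - th * (if z = y then 1 else 0)"
    using y unfolding bf_def by (auto simp: eq1)
  have "(\<Sum>z\<in>carrier G. bf th (z \<otimes> inv y)) = (\<Sum>z\<in>carrier G. (if z \<otimes> inv y \<in> D then 1 else 0) - th * (if z = y then 1 else 0))"
    by (rule sum.cong[OF refl e])
  also have "\<dots> = int k - th" using y fin \<open>{z. z = y \<and> z \<in> carrier G} = {y}\<close>
    by (simp add: sum_subtractf sum_ind col_count sum_distrib_left[symmetric])
  finally show ?thesis .
qed

lemma S1:
  assumes x: "x \<in> carrier G" and y: "y \<in> carrier G"
    and hs: "s = int lam - int mu - 2 * th"
    and hq: "th^2 - (int lam - int mu) * th - (int k - int mu) = 0"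
  shows "(\<Sum>z\<in>carrier G. bf th (x \<otimes> inv z) * bf th (z \<otimes> inv y)) = s * bf th (x \<otimes> inv y) + int mu"
proof -
  define i where "i = (if x \<otimes> inv y \<in> D then 1 else 0 :: int)"
  have e: "\<And>z. z \<in> carrier G \<Longrightarrow> bf th (x \<otimes> inv z) * bf th (z \<otimes> inv y) =
     (if x \<otimes> inv z \<in> D \<and> z \<otimes> inv y \<in> D then 1 else 0) - th * (if z = x then i else 0)
     - th * (if z = y then i else 0) + th^2 * (if z = x then (if x = y then 1 else 0) else 0)"
    using x y oneD unfolding bf_def i_def by (auto simp: eq1 algebra_simps power2_eq_square)
  have "(\<Sum>z\<in>carrier G. bf th (x \<otimes> inv z) * bf th (z \<otimes> inv y)) =
     (\<Sum>z\<in>carrier G. (if x \<otimes> inv z \<in> D \<and> z \<otimes> inv y \<in> D then 1 else 0) - th * (if z = x then i else 0)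
     - th * (if z = y then i else 0) + th^2 * (if z = x then (if x = y then 1 else 0) else 0))"
    by (rule sum.cong[OF refl e])
  also have "\<dots> = int (card {z \<in> carrier G. x \<otimes> inv z \<in> D \<and> z \<otimes> inv y \<in> D}) - th * i - th * i
      + th^2 * (if x = y then 1 else 0)"
    using x y fin
    by (simp add: sum.distrib sum_subtractf sum_ind sum_distrib_left[symmetric] sum.delta)
  finally have sum_eq: "(\<Sum>z\<in>carrier G. bf th (x \<otimes> inv z) * bf th (z \<otimes> inv y)) =
      int (card {z \<in> carrier G. x \<otimes> inv z \<in> D \<and> z \<otimes> inv y \<in> D}) - 2 * th * i
      + th^2 * (if x = y then 1 else 0)" by simp
  have sth: "s * th = (int lam - int mu) * th - 2 * th^2" by (simp add: hs algebra_simps power2_eq_square)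
  show ?thesis
  proof (cases "x = y")
    case True
    have "{z \<in> carrier G. x \<otimes> inv z \<in> D \<and> z \<otimes> inv y \<in> D} = {z \<in> carrier G. x \<otimes> inv z \<in> D}"
    proof -
      have "z \<otimes> inv x \<in> D" if "z \<in> carrier G" "x \<otimes> inv z \<in> D" for z
        using invD[OF that(2)] that x by (simp add: inv_mult_group)
      then show ?thesis using True by auto
    qed
    then have c: "card {z \<in> carrier G. x \<otimes> inv z \<in> D \<and> z \<otimes> inv y \<in> D} = k" using row_count[OF x] by simp
    have "i = 0" "bf th (x \<otimes> inv y) = - th" using True x oneD unfolding i_def bf_def by auto
    then show ?thesis using sum_eq c True sth hq by simp
  next
    case False
    have ne: "x \<otimes> inv y \<noteq> \<one>" using False x y eq1 by simp
    have c: "card {z \<in> carrier G. x \<otimes> inv z \<in> D \<and> z \<otimes> inv y \<in> D} = pds_rep G D (x \<otimes> inv y)"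
      by (rule pair_count[OF x y])
    show ?thesis
    proof (cases "x \<otimes> inv y \<in> D")
      case True
      then have "i = 1" "bf th (x \<otimes> inv y) = 1" "pds_rep G D (x \<otimes> inv y) = lam"
        using ne lamD unfolding i_def bf_def by auto
      then show ?thesis using sum_eq c False hs by simp
    next
      case nD: False
      then have "i = 0" "bf th (x \<otimes> inv y) = 0" "pds_rep G D (x \<otimes> inv y) = mu"
        using ne muD x y unfolding i_def bf_def by auto
      then show ?thesis using sum_eq c False by simp
    qed
  qed
qed

lemma fiber_eq:
  assumes h: "h \<in> carrier G" and x0: "x0 \<in> carrier G"
  shows "{x \<in> carrier G. x \<otimes> h \<otimes> inv x = x0 \<otimes> h \<otimes> inv x0} = (\<lambda>c. x0 \<otimes> c) ` centralizer G h"
proof (intro equalityI subsetI)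
  fix x assume "x \<in> {x \<in> carrier G. x \<otimes> h \<otimes> inv x = x0 \<otimes> h \<otimes> inv x0}"
  then have x: "x \<in> carrier G" and e: "x \<otimes> h \<otimes> inv x = x0 \<otimes> h \<otimes> inv x0" by auto
  define c where "c = inv x0 \<otimes> x"
  have c: "c \<in> carrier G" using x x0 c_def by simp
  have xc: "x = x0 \<otimes> c" using x x0 unfolding c_def by (simp add: m_assoc[symmetric])
  have "x0 \<otimes> (c \<otimes> h \<otimes> inv c) \<otimes> inv x0 = x0 \<otimes> h \<otimes> inv x0"
    using e xc c x0 h by (simp add: m_assoc inv_mult_group)
  then have "c \<otimes> h \<otimes> inv c = h" using c x0 h
    by (metis inv_closed l_cancel m_closed r_cancel)
  then have "c \<otimes> h = h \<otimes> c" using c h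
    by (metis inv_closed l_inv m_assoc m_closed r_one)
  then have "c \<in> centralizer G h" using c unfolding centralizer_def by simp
  then show "x \<in> (\<lambda>c. x0 \<otimes> c) ` centralizer G h" using xc by blast
next
  fix x assume "x \<in> (\<lambda>c. x0 \<otimes> c) ` centralizer G h"
  then obtain c where c: "c \<in> carrier G" "c \<otimes> h = h \<otimes> c" and xc: "x = x0 \<otimes> c"
    unfolding centralizer_def by auto
  have "c \<otimes> h \<otimes> inv c = h" using c h
    by (metis inv_closed m_assoc m_closed r_inv r_one)
  moreover have "x \<otimes> h \<otimes> inv x = x0 \<otimes> (c \<otimes> h \<otimes> inv c) \<otimes> inv x0" using xc c(1) x0 h
    by (simp add: m_assoc inv_mult_group)
  ultimately have "x \<otimes> h \<otimes> inv x = x0 \<otimes> h \<otimes> inv x0" by simp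
  then show "x \<in> {x \<in> carrier G. x \<otimes> h \<otimes> inv x = x0 \<otimes> h \<otimes> inv x0}" using xc c x0 by simp
qed

lemma conj_count:
  assumes h: "h \<in> carrier G"
  shows "card {x \<in> carrier G. x \<otimes> h \<otimes> inv x \<in> D} = card (conj_class G h \<inter> D) * card (centralizer G h)"
proof -
  let ?I = "conj_class G h \<inter> D"
  let ?A = "\<lambda>y. {x \<in> carrier G. x \<otimes> h \<otimes> inv x = y}"
  have S: "{x \<in> carrier G. x \<otimes> h \<otimes> inv x \<in> D} = (\<Union>y\<in>?I. ?A y)"
    unfolding conj_class_def by auto
  have finI: "finite ?I" using fin Dsub finite_subset by blast
  have finA: "\<forall>y\<in>?I. finite (?A y)" using fin by auto
  have "card (\<Union>y\<in>?I. ?A y) = (\<Sum>y\<in>?I. card (?A y))"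
    by (rule card_UN_disjoint[OF finI]) (use finA in auto)
  also have "\<dots> = (\<Sum>y\<in>?I. card (centralizer G h))"
  proof (rule sum.cong[OF refl])
    fix y assume "y \<in> ?I"
    then obtain x0 where x0: "x0 \<in> carrier G" and y: "y = x0 \<otimes> h \<otimes> inv x0"
      unfolding conj_class_def by auto
    have "inj_on (\<lambda>c. x0 \<otimes> c) (centralizer G h)"
      using x0 unfolding centralizer_def by (auto intro: inj_onI)
    then show "card (?A y) = card (centralizer G h)"
      unfolding y fiber_eq[OF h x0] by (rule card_image)
  qed
  also have "\<dots> = card ?I * card (centralizer G h)" by simp
  finally show ?thesis using S by simp
qed

definition Km :: "nat \<Rightarrow> (nat \<Rightarrow> 'a) \<Rightarrow> ('a \<Rightarrow> 'a \<Rightarrow> rat) \<Rightarrow> rat mat" where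
  "Km n e f = mat n n (\<lambda>(i,j). f (e i) (e j))"

lemma Km_carrier[simp]: "Km n e f \<in> carrier_mat n n"
  unfolding Km_def by simp

lemma Km_mult:
  assumes e: "bij_betw e {0..<n} (carrier G)"
  shows "Km n e f * Km n e g = Km n e (\<lambda>x y. \<Sum>z\<in>carrier G. f x z * g z y)"
proof (rule eq_matI)
  fix i j assume i: "i < dim_row (Km n e (\<lambda>x y. \<Sum>z\<in>carrier G. f x z * g z y))"
    and j: "j < dim_col (Km n e (\<lambda>x y. \<Sum>z\<in>carrier G. f x z * g z y))"
  then have i: "i < n" and j: "j < n" unfolding Km_def by auto
  have "(Km n e f * Km n e g) $$ (i, j) = (\<Sum>l\<in>{0..<n}. f (e i) (e l) * g (e l) (e j))"
    using i j unfolding Km_def by (simp add: scalar_prod_def)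
  also have "\<dots> = (\<Sum>z\<in>carrier G. f (e i) z * g z (e j))"
    by (rule sum.reindex_bij_betw[OF e])
  finally show "(Km n e f * Km n e g) $$ (i, j) = Km n e (\<lambda>x y. \<Sum>z\<in>carrier G. f x z * g z y) $$ (i, j)"
    using i j unfolding Km_def by simp
qed (auto simp: Km_def)

lemma Km_cong:
  assumes e: "bij_betw e {0..<n} (carrier G)"
    and fg: "\<And>x y. x \<in> carrier G \<Longrightarrow> y \<in> carrier G \<Longrightarrow> f x y = g x y"
  shows "Km n e f = Km n e g"
proof (rule eq_matI)
  fix i j assume "i < dim_row (Km n e g)" "j < dim_col (Km n e g)"
  then have i: "i < n" and j: "j < n" unfolding Km_def by auto
  then have "e i \<in> carrier G" "e j \<in> carrier G" using e unfolding bij_betw_def by auto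
  then show "Km n e f $$ (i, j) = Km n e g $$ (i, j)" using i j fg unfolding Km_def by simp
qed (auto simp: Km_def)

lemma Km_trace:
  assumes e: "bij_betw e {0..<n} (carrier G)"
  shows "mtrace (Km n e f) = (\<Sum>x\<in>carrier G. f x x)"
proof -
  have "mtrace (Km n e f) = (\<Sum>i\<in>{0..<n}. f (e i) (e i))"
    unfolding mtrace_def Km_def by (simp add: atLeast0LessThan)
  also have "\<dots> = (\<Sum>x\<in>carrier G. f x x)" by (rule sum.reindex_bij_betw[OF e])
  finally show ?thesis .
qed

lemma Km_one:
  assumes e: "bij_betw e {0..<n} (carrier G)"
  shows "Km n e (\<lambda>x y. if x = y then 1 else 0) = 1\<^sub>m n"
proof (rule eq_matI)
  fix i j assume "i < dim_row (1\<^sub>m n :: rat mat)" "j < dim_col (1\<^sub>m n :: rat mat)"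
  then have i: "i < n" and j: "j < n" by auto
  have "(e i = e j) = (i = j)" using e i j unfolding bij_betw_def inj_on_def by auto
  then show "Km n e (\<lambda>x y. if x = y then 1 else 0) $$ (i, j) = 1\<^sub>m n $$ (i, j)"
    using i j unfolding Km_def by simp
qed (auto simp: Km_def)

lemma sum_delta_left:
  assumes g: "g \<in> carrier G" and x: "x \<in> carrier G"
  shows "(\<Sum>z\<in>carrier G. (if x = z \<otimes> g then 1 else 0) * F z) = (F (x \<otimes> inv g) :: rat)"
proof -
  have "(\<Sum>z\<in>carrier G. (if x = z \<otimes> g then 1 else 0) * F z) = (\<Sum>z\<in>carrier G. if z = x \<otimes> inv g then F z else 0)"
  proof (rule sum.cong[OF refl])
    fix z assume z: "z \<in> carrier G"
    have "(x = z \<otimes> g) = (z = x \<otimes> inv g)" using z g x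
      by (metis inv_closed inv_solve_right)
    then show "(if x = z \<otimes> g then 1 else 0) * F z = (if z = x \<otimes> inv g then F z else 0)" by simp
  qed
  also have "\<dots> = F (x \<otimes> inv g)" using fin x g by (simp add: sum.delta)
  finally show ?thesis .
qed

lemma sum_delta_right:
  assumes g: "g \<in> carrier G" and y: "y \<in> carrier G"
  shows "(\<Sum>z\<in>carrier G. F z * (if z = y \<otimes> g then 1 else 0)) = (F (y \<otimes> g) :: rat)"
proof -
  have "(\<Sum>z\<in>carrier G. F z * (if z = y \<otimes> g then 1 else 0)) = (\<Sum>z\<in>carrier G. if z = y \<otimes> g then F z else 0)"
    by (rule sum.cong) auto
  also have "\<dots> = F (y \<otimes> g)" using fin y g by (simp add: sum.delta)
  finally show ?thesis .
qed

definition Pg :: "nat \<Rightarrow> (nat \<Rightarrow> 'a) \<Rightarrow> 'a \<Rightarrow> rat mat" where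
  "Pg n e g = Km n e (\<lambda>x y. if x = y \<otimes> g then 1 else 0)"

lemma Pg_carrier[simp]: "Pg n e g \<in> carrier_mat n n" unfolding Pg_def by simp

lemma Pg_mult:
  assumes e: "bij_betw e {0..<n} (carrier G)" and g1: "g1 \<in> carrier G" and g2: "g2 \<in> carrier G"
  shows "Pg n e g1 * Pg n e g2 = Pg n e (g2 \<otimes> g1)"
proof -
  have "Pg n e g1 * Pg n e g2 = Km n e (\<lambda>x y. \<Sum>z\<in>carrier G. (if x = z \<otimes> g1 then 1 else 0) * (if z = y \<otimes> g2 then 1 else 0))"
    unfolding Pg_def by (rule Km_mult[OF e])
  also have "\<dots> = Pg n e (g2 \<otimes> g1)"
    unfolding Pg_def
  proof (rule Km_cong[OF e])
    fix x y assume x: "x \<in> carrier G" and y: "y \<in> carrier G"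
    show "(\<Sum>z\<in>carrier G. (if x = z \<otimes> g1 then 1 else 0) * (if z = y \<otimes> g2 then 1 else 0)) =
          (if x = y \<otimes> (g2 \<otimes> g1) then 1 else (0::rat))"
      by (subst sum_delta_right[OF g2 y]) (simp add: m_assoc x y g1 g2)
  qed
  finally show ?thesis .
qed

lemma S3:
  assumes hs: "s = int lam - int mu - 2 * th"
    and hq: "th^2 - (int lam - int mu) * th - (int k - int mu) = 0"
  shows "(int k - th) * (int k - th) = s * (int k - th) + int mu * int (card (carrier G))"
proof -
  let ?x = "\<one>"
  have x: "?x \<in> carrier G" by simp
  have "(\<Sum>y\<in>carrier G. \<Sum>z\<in>carrier G. bf th (?x \<otimes> inv z) * bf th (z \<otimes> inv y))
      = (\<Sum>y\<in>carrier G. s * bf th (?x \<otimes> inv y) + int mu)"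
    by (rule sum.cong[OF refl]) (rule S1[OF x _ hs hq])
  also have "\<dots> = s * (int k - th) + int mu * int (card (carrier G))"
    using S2row[OF x] by (simp add: sum.distrib sum_distrib_left[symmetric])
  finally have 1: "(\<Sum>y\<in>carrier G. \<Sum>z\<in>carrier G. bf th (?x \<otimes> inv z) * bf th (z \<otimes> inv y)) = s * (int k - th) + int mu * int (card (carrier G))" .
  have "(\<Sum>y\<in>carrier G. \<Sum>z\<in>carrier G. bf th (?x \<otimes> inv z) * bf th (z \<otimes> inv y))
      = (\<Sum>z\<in>carrier G. bf th (?x \<otimes> inv z) * (\<Sum>y\<in>carrier G. bf th (z \<otimes> inv y)))"
    by (subst sum.swap) (simp add: sum_distrib_left)
  also have "\<dots> = (\<Sum>z\<in>carrier G. bf th (?x \<otimes> inv z) * (int k - th))"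
    by (rule sum.cong[OF refl]) (simp add: S2row)
  also have "\<dots> = (int k - th) * (int k - th)"
    using S2row[OF x] by (simp add: sum_distrib_right[symmetric])
  finally show ?thesis using 1 by simp
qed

definition mf :: "int \<Rightarrow> 'a \<Rightarrow> 'a \<Rightarrow> int" where
  "mf th x y = int (card (carrier G)) * bf th (x \<otimes> inv y) - (int k - th)"

lemma MM:
  assumes x: "x \<in> carrier G" and y: "y \<in> carrier G"
    and hs: "s = int lam - int mu - 2 * th"
    and hq: "th^2 - (int lam - int mu) * th - (int k - int mu) = 0"
  shows "(\<Sum>z\<in>carrier G. mf th x z * mf th z y) = int (card (carrier G)) * s * mf th x y"
proof -
  let ?n = "int (card (carrier G))" and ?c = "int k - th"
  have "(\<Sum>z\<in>carrier G. mf th x z * mf th z y) =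
     (\<Sum>z\<in>carrier G. ?n * ?n * (bf th (x \<otimes> inv z) * bf th (z \<otimes> inv y)) - ?n * ?c * bf th (x \<otimes> inv z)
        - ?n * ?c * bf th (z \<otimes> inv y) + ?c * ?c)"
    unfolding mf_def by (rule sum.cong[OF refl]) (simp add: algebra_simps)
  also have "\<dots> = ?n * ?n * (\<Sum>z\<in>carrier G. bf th (x \<otimes> inv z) * bf th (z \<otimes> inv y))
      - ?n * ?c * (\<Sum>z\<in>carrier G. bf th (x \<otimes> inv z)) - ?n * ?c * (\<Sum>z\<in>carrier G. bf th (z \<otimes> inv y))
      + ?n * (?c * ?c)"
    by (simp add: sum.distrib sum_subtractf sum_distrib_left)
  also have "\<dots> = ?n * ?n * (s * bf th (x \<otimes> inv y) + int mu) - ?n * ?c * ?c - ?n * ?c * ?c + ?n * (?c * ?c)"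
    by (simp only: S1[OF x y hs hq] S2row[OF x] S2col[OF y])
  also have "\<dots> = ?n * ?n * (s * bf th (x \<otimes> inv y) + int mu) - ?n * (?c * ?c)"
    by (simp add: algebra_simps)
  also have "\<dots> = ?n * ?n * (s * bf th (x \<otimes> inv y) + int mu) - ?n * (s * ?c + int mu * ?n)"
    by (simp only: S3[OF hs hq])
  also have "\<dots> = ?n * s * mf th x y" unfolding mf_def by (simp add: algebra_simps)
  finally show ?thesis .
qed

definition Ef :: "int \<Rightarrow> int \<Rightarrow> 'a \<Rightarrow> 'a \<Rightarrow> rat" where
  "Ef th s x y = rat_of_int (mf th x y) / rat_of_int (int (card (carrier G)) * s)"

lemma EE:
  assumes e: "bij_betw e {0..<n} (carrier G)"
    and hs: "s = int lam - int mu - 2 * th"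
    and hq: "th^2 - (int lam - int mu) * th - (int k - int mu) = 0"
    and s0: "s \<noteq> 0" and n0: "card (carrier G) > 0"
  shows "Km n e (Ef th s) * Km n e (Ef th s) = Km n e (Ef th s)"
  unfolding Km_mult[OF e]
proof (rule Km_cong[OF e])
  fix x y assume x: "x \<in> carrier G" and y: "y \<in> carrier G"
  let ?d = "rat_of_int (int (card (carrier G)) * s)"
  have d0: "?d \<noteq> 0" using s0 n0 by simp
  have "(\<Sum>z\<in>carrier G. Ef th s x z * Ef th s z y) = (\<Sum>z\<in>carrier G. rat_of_int (mf th x z * mf th z y)) / (?d * ?d)"
    unfolding Ef_def by (simp add: sum_divide_distrib)
  also have "\<dots> = rat_of_int (\<Sum>z\<in>carrier G. mf th x z * mf th z y) / (?d * ?d)"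
    by (simp only: of_int_sum)
  also have "\<dots> = rat_of_int (mf th x y) * ?d / (?d * ?d)"
    by (simp only: MM[OF x y hs hq]) (simp add: algebra_simps)
  also have "\<dots> = Ef th s x y" unfolding Ef_def using d0 by simp
  finally show "(\<Sum>z\<in>carrier G. Ef th s x z * Ef th s z y) = Ef th s x y" .
qed

lemma E_Pg_comm:
  assumes e: "bij_betw e {0..<n} (carrier G)" and g: "g \<in> carrier G"
  shows "Km n e (Ef th s) * Pg n e g = Pg n e g * Km n e (Ef th s)"
  unfolding Pg_def Km_mult[OF e]
proof (rule Km_cong[OF e])
  fix x y assume x: "x \<in> carrier G" and y: "y \<in> carrier G"
  have "(\<Sum>z\<in>carrier G. Ef th s x z * (if z = y \<otimes> g then 1 else 0)) = Ef th s x (y \<otimes> g)"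
    by (rule sum_delta_right[OF g y])
  also have "\<dots> = Ef th s (x \<otimes> inv g) y"
    unfolding Ef_def mf_def using x y g by (simp add: inv_mult_group m_assoc)
  also have "\<dots> = (\<Sum>z\<in>carrier G. (if x = z \<otimes> g then 1 else 0) * Ef th s z y)"
    by (rule sum_delta_left[OF g x, symmetric])
  finally show "(\<Sum>z\<in>carrier G. Ef th s x z * (if z = y \<otimes> g then 1 else 0)) =
      (\<Sum>z\<in>carrier G. (if x = z \<otimes> g then 1 else 0) * Ef th s z y)" .
qed

lemma T_pow:
  assumes e: "bij_betw e {0..<n} (carrier G)"
    and hs: "s = int lam - int mu - 2 * th"
    and hq: "th^2 - (int lam - int mu) * th - (int k - int mu) = 0"
    and s0: "s \<noteq> 0" and n0: "card (carrier G) > 0" and h: "h \<in> carrier G"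
  shows "(Km n e (Ef th s) * Pg n e h) ^\<^sub>m Suc r = Km n e (Ef th s) * Pg n e (h [^] Suc r)"
proof (induction r)
  case 0
  have "(Km n e (Ef th s) * Pg n e h) ^\<^sub>m Suc 0 = 1\<^sub>m n * (Km n e (Ef th s) * Pg n e h)"
    by (simp add: Km_def)
  also have "\<dots> = Km n e (Ef th s) * Pg n e h"
    by (rule left_mult_one_mat) (rule mult_carrier_mat[OF Km_carrier Pg_carrier])
  finally show ?case using h by simp
next
  case (Suc r)
  let ?E = "Km n e (Ef th s)" and ?A = "Pg n e (h [^] Suc r)" and ?B = "Pg n e h"
  have E: "?E \<in> carrier_mat n n" and A: "?A \<in> carrier_mat n n" and B: "?B \<in> carrier_mat n n" by simp_all
  have hr: "h [^] Suc r \<in> carrier G" using h by simp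
  have "(Km n e (Ef th s) * Pg n e h) ^\<^sub>m Suc (Suc r) = (?E * ?A) * (?E * ?B)"
    using Suc by simp
  also have "\<dots> = ?E * (?A * (?E * ?B))" by (rule assoc_mult_mat[OF E A mult_carrier_mat[OF E B]])
  also have "?A * (?E * ?B) = (?A * ?E) * ?B" by (rule assoc_mult_mat[symmetric, OF A E B])
  also have "?A * ?E = ?E * ?A" by (rule E_Pg_comm[OF e hr, symmetric])
  also have "(?E * ?A) * ?B = ?E * (?A * ?B)" by (rule assoc_mult_mat[OF E A B])
  also have "?E * (?E * (?A * ?B)) = (?E * ?E) * (?A * ?B)"
    by (rule assoc_mult_mat[symmetric, OF E E mult_carrier_mat[OF A B]])
  also have "?E * ?E = ?E" by (rule EE[OF e hs hq s0 n0])
  also have "?A * ?B = Pg n e (h \<otimes> h [^] Suc r)" by (rule Pg_mult[OF e hr h])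
  also have "h \<otimes> h [^] Suc r = h [^] Suc (Suc r)" by (rule nat_pow_Suc2[OF h, symmetric])
  finally show ?case .
qed

lemma T_def_eq:
  assumes e: "bij_betw e {0..<n} (carrier G)" and h: "h \<in> carrier G"
  shows "Km n e (Ef th s) * Pg n e h = Km n e (\<lambda>x y. Ef th s x (y \<otimes> h))"
  unfolding Pg_def Km_mult[OF e]
  by (rule Km_cong[OF e]) (rule sum_delta_right[OF h])

lemma T_fix:
  assumes e: "bij_betw e {0..<n} (carrier G)"
    and hs: "s = int lam - int mu - 2 * th"
    and hq: "th^2 - (int lam - int mu) * th - (int k - int mu) = 0"
    and s0: "s \<noteq> 0" and h: "h \<in> carrier G"
  shows "(Km n e (Ef th s) * Pg n e h) ^\<^sub>m Suc (card (carrier G)) = Km n e (Ef th s) * Pg n e h"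
proof -
  have n0: "card (carrier G) > 0" using fin by (simp add: card_gt_0_iff) blast
  have "h [^] card (carrier G) = \<one>" using pow_order_eq_1[OF h] unfolding Coset.order_def .
  then have "h [^] Suc (card (carrier G)) = h" using h by simp
  then show ?thesis using T_pow[OF e hs hq s0 n0 h] by simp
qed

lemma T_trace:
  assumes e: "bij_betw e {0..<n} (carrier G)" and h: "h \<in> carrier G" and s0: "s \<noteq> 0"
  shows "mtrace (Km n e (Ef th s) * Pg n e h) =
    rat_of_int (int (card {x \<in> carrier G. x \<otimes> h \<otimes> inv x \<in> D})
      - th * int (card (carrier G)) * (if h = \<one> then 1 else 0) - (int k - th)) / rat_of_int s"
proof -
  have n0: "card (carrier G) > 0" using fin by (simp add: card_gt_0_iff) blast
  let ?n = "int (card (carrier G))"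
  have "mtrace (Km n e (Ef th s) * Pg n e h) = (\<Sum>x\<in>carrier G. Ef th s x (x \<otimes> h))"
    unfolding T_def_eq[OF e h] Km_trace[OF e] ..
  also have "\<dots> = rat_of_int (\<Sum>x\<in>carrier G. mf th x (x \<otimes> h)) / rat_of_int (?n * s)"
    unfolding Ef_def by (simp add: sum_divide_distrib)
  also have "(\<Sum>x\<in>carrier G. mf th x (x \<otimes> h)) =
      ?n * (\<Sum>x\<in>carrier G. (if x \<otimes> h \<otimes> inv x \<in> D then 1 else 0) - th * (if h = \<one> then 1 else 0)) - ?n * (int k - th)"
  proof -
    have "\<And>x. x \<in> carrier G \<Longrightarrow> bf th (x \<otimes> inv (x \<otimes> h)) = (if x \<otimes> h \<otimes> inv x \<in> D then 1 else 0) - th * (if h = \<one> then 1 else 0)"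
    proof -
      fix x assume x: "x \<in> carrier G"
      have i: "inv (x \<otimes> inv (x \<otimes> h)) = x \<otimes> h \<otimes> inv x" using x h
        by (simp add: inv_mult_group m_assoc)
      have "(x \<otimes> inv (x \<otimes> h) \<in> D) = (x \<otimes> h \<otimes> inv x \<in> D)"
        using invD i x h by (metis inv_inv m_closed inv_closed)
      moreover have "(x \<otimes> inv (x \<otimes> h) = \<one>) = (h = \<one>)"
        using x h eq1 by (metis l_cancel_one' m_closed r_one)
      ultimately show "bf th (x \<otimes> inv (x \<otimes> h)) = (if x \<otimes> h \<otimes> inv x \<in> D then 1 else 0) - th * (if h = \<one> then 1 else 0)"
        unfolding bf_def by simp
    qed
    then show ?thesis unfolding mf_def
      by (simp add: sum_subtractf sum_distrib_left[symmetric])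
  qed
  also have "(\<Sum>x\<in>carrier G. (if x \<otimes> h \<otimes> inv x \<in> D then 1 else 0) - th * (if h = \<one> then 1 else 0))
     = int (card {x \<in> carrier G. x \<otimes> h \<otimes> inv x \<in> D}) - th * ?n * (if h = \<one> then 1 else 0)"
    by (simp add: sum_subtractf sum_ind)
  finally have "mtrace (Km n e (Ef th s) * Pg n e h) = rat_of_int (?n * (int (card {x \<in> carrier G. x \<otimes> h \<otimes> inv x \<in> D}) - th * ?n * (if h = \<one> then 1 else 0)) - ?n * (int k - th)) / rat_of_int (?n * s)" .
  also have "\<dots> = rat_of_int ?n * rat_of_int (int (card {x \<in> carrier G. x \<otimes> h \<otimes> inv x \<in> D}) - th * ?n * (if h = \<one> then 1 else 0) - (int k - th)) / (rat_of_int ?n * rat_of_int s)"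
    by (simp only: right_diff_distrib[symmetric] of_int_mult)
  also have "\<dots> = rat_of_int (int (card {x \<in> carrier G. x \<otimes> h \<otimes> inv x \<in> D}) - th * ?n * (if h = \<one> then 1 else 0) - (int k - th)) / rat_of_int s"
    using n0 by (simp only: mult_divide_mult_cancel_left_if) simp
  finally show ?thesis .
qed

end

theorem mainTheorem16:
  fixes G :: "('a, 'b) monoid_scheme" and D :: "'a set"
    and v k lam mu :: nat and s :: int and p l :: nat and h :: 'a
  assumes "group G" and "finite (carrier G)"
    and "is_regular_PDS G D v k lam mu"
    and "0 < mu" and "mu < k"
    and "s \<ge> 0" and "s^2 = pds_Delta k lam mu"
    and "prime p" and "int p dvd s"
    and "int p ^ l dvd s" and "\<not> int p ^ (l + 1) dvd s"
    and "h \<in> carrier G"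
  shows "(h \<noteq> \<one>\<^bsub>G\<^esub> \<and> \<not> p ^ l dvd card (centralizer G h) \<longrightarrow>
           [int (card (conj_class G h \<inter> D) * card (centralizer G h))
              = int k - pds_theta2 lam mu s] (mod int p ^ l))
       \<and> (h = \<one>\<^bsub>G\<^esub> \<longrightarrow>
           [int (card (conj_class G h \<inter> D) * card (centralizer G h))
              = int k + pds_theta2 lam mu s * (int (card (carrier G)) - 1)] (mod int p ^ l))"
proof -
  note grp = assms(1) and finG = assms(2) and reg = assms(3) and hG = assms(12)
  from reg have Dsub: "D \<subseteq> carrier G" and cardD: "card D = k"
    and lamD: "\<forall>g\<in>D. g \<noteq> \<one>\<^bsub>G\<^esub> \<longrightarrow> pds_rep G D g = lam"
    and muD: "\<forall>g\<in>carrier G - D. g \<noteq> \<one>\<^bsub>G\<^esub> \<longrightarrow> pds_rep G D g = mu"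
    and invD: "(\<lambda>x. inv\<^bsub>G\<^esub> x) ` D = D" and oneD: "\<one>\<^bsub>G\<^esub> \<notin> D"
    unfolding is_regular_PDS_def is_PDS_def by auto
  have ctx: "pds_ctx G D k lam mu"
    unfolding pds_ctx_def pds_ctx_axioms_def
    using grp finG Dsub cardD lamD muD invD oneD by blast
  interpret P: pds_ctx G D k lam mu by (rule ctx)
  define d where "d = int lam - int mu"
  define th where "th = pds_theta2 lam mu s"
  have Delta: "s^2 = d^2 + 4 * (int k - int mu)" using assms(7) unfolding pds_Delta_def d_def by simp
  have ev: "even (d - s)"
  proof (rule ccontr)
    assume o: "odd (d - s)"
    have "(s - d) * (s + d) = 4 * (int k - int mu)" using Delta by (simp add: algebra_simps power2_eq_square)
    then have "even ((s - d) * (s + d))" by simp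
    moreover have "odd (s - d)" using o by (metis dvd_minus_iff minus_diff_eq)
    moreover have "odd (s + d)"
    proof -
      have "s + d = (s - d) + 2 * d" by simp
      then show ?thesis using \<open>odd (s - d)\<close> by simp
    qed
    ultimately show False by simp
  qed
  have hs2: "2 * th = d - s" unfolding th_def pds_theta2_def d_def[symmetric] using ev by simp
  have hs: "s = int lam - int mu - 2 * th" using hs2 unfolding d_def by simp
  have "4 * (th^2 - d * th - (int k - int mu)) = (2*th)^2 - 2 * d * (2*th) - 4 * (int k - int mu)"
    by (simp add: algebra_simps power2_eq_square)
  also have "\<dots> = s^2 - d^2 - 4 * (int k - int mu)" unfolding hs2 by (simp add: algebra_simps power2_eq_square)
  also have "\<dots> = 0" using Delta by simp
  finally have hq: "th^2 - (int lam - int mu) * th - (int k - int mu) = 0" unfolding d_def by simp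
  have s0: "s \<noteq> 0"
  proof
    assume "s = 0"
    then have "d^2 + 4 * (int k - int mu) = 0" using Delta by simp
    moreover have "d^2 \<ge> 0" by simp
    ultimately show False using assms(5) by simp
  qed
  define n where "n = card (carrier G)"
  obtain e where e: "bij_betw e {0..<n} (carrier G)"
    using ex_bij_betw_nat_finite[OF finG] unfolding n_def by blast
  have n0: "n > 0" using finG hG unfolding n_def by (simp add: card_gt_0_iff) blast
  define T where "T = P.Km n e (P.Ef th s) * P.Pg n e h"
  have Tc: "T \<in> carrier_mat n n" unfolding T_def by (rule mult_carrier_mat[OF P.Km_carrier P.Pg_carrier])
  have Tp: "T ^\<^sub>m Suc n = T" unfolding T_def n_def
    by (rule P.T_fix[OF e[unfolded n_def] hs hq s0 hG])
  have "mtrace T \<in> \<int>" by (rule trace_integral[OF Tc n0 Tp])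
  then obtain z where z: "mtrace T = of_int z" by (elim Ints_cases)
  define N where "N = int (card {x \<in> carrier G. x \<otimes>\<^bsub>G\<^esub> h \<otimes>\<^bsub>G\<^esub> inv\<^bsub>G\<^esub> x \<in> D})"
  define Y where "Y = N - th * int n * (if h = \<one>\<^bsub>G\<^esub> then 1 else 0) - (int k - th)"
  have "mtrace T = rat_of_int Y / rat_of_int s"
    unfolding T_def Y_def N_def n_def by (rule P.T_trace[OF e[unfolded n_def] hG s0])
  with z have "rat_of_int Y = rat_of_int (s * z)" using s0 by (simp add: field_simps)
  then have Yz: "Y = s * z" by (simp only: of_int_eq_iff)
  have N: "N = int (card (conj_class G h \<inter> D) * card (centralizer G h))"
    unfolding N_def using P.conj_count[OF hG] by simp
  have pd: "int p ^ l dvd Y" using assms(10) Yz by simp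
  show ?thesis
  proof (intro conjI impI)
    assume "h \<noteq> \<one>\<^bsub>G\<^esub> \<and> \<not> p ^ l dvd card (centralizer G h)"
    then have "Y = N - (int k - th)" unfolding Y_def by simp
    then show "[int (card (conj_class G h \<inter> D) * card (centralizer G h)) = int k - pds_theta2 lam mu s] (mod int p ^ l)"
      using pd unfolding N th_def by (simp add: cong_iff_dvd_diff)
  next
    assume h1: "h = \<one>\<^bsub>G\<^esub>"
    then have "Y = N - (int k + th * (int n - 1))" unfolding Y_def by (simp add: algebra_simps)
    then show "[int (card (conj_class G h \<inter> D) * card (centralizer G h)) = int k + pds_theta2 lam mu s * (int (card (carrier G)) - 1)] (mod int p ^ l)"
      using pd unfolding N th_def n_def by (simp add: cong_iff_dvd_diff)
  qed
qed

end
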